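(* Let $k \geq 3$ be an integer. For integers $n \geq 1$ let $P(n;k) = \frac{(k-2)n^2 + (4-k)n}{2}$ be the $n$-th $k$-gonal number, and for integers $m \geq 0$ let $C(m;k) = \frac{km^2 - km + 2}{2}$ be the $m$-th centered $k$-gonal number. Then the numbers that are both $k$-gonal and centered $k$-gonal (i.e. the integers $N$ such that $N = P(n;k)$ for some integer $n \geq 1$ and $N = C(m;k)$ for some integer $m \geq 0$) are exactly the numbers $$\frac{k}{16(k - 2)}\left\{\frac{-2k^2 + 18k - 32}{k} + \left[k - 1 + \sqrt{k(k - 2)}\right]^{2i + 1} + \left[k - 1 - \sqrt{k(k - 2)}\right]^{2i + 1}\right\}, \qquad i \geq 0 .$$
   Context: $P(n;k)$ denotes the $n$-th $k$-gonal (polygonal) number and $C(m;k)$ the $m$-th centered $k$-gonal number, with the explicit formulas given in the claim. *)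

theory Defs
  imports Complex_Main
begin

definition polygonal :: "int \<Rightarrow> int \<Rightarrow> real" where
  "polygonal n k = (real_of_int (k - 2) * (real_of_int n)^2 + real_of_int (4 - k) * real_of_int n) / 2"

definition centered_polygonal :: "int \<Rightarrow> int \<Rightarrow> real" where
  "centered_polygonal m k = (real_of_int k * (real_of_int m)^2 - real_of_int k * real_of_int m + 2) / 2"

end

theory Submission
  imports Defs
begin

fun AB :: "int \<Rightarrow> nat \<Rightarrow> int \<times> int" where
  "AB k 0 = (k, 1)"
| "AB k (Suc i) = (case AB k i of (a, b) \<Rightarrow> ((k-1)*a + k*(k-2)*b, a + (k-1)*b))"

fun NM :: "int \<Rightarrow> nat \<Rightarrow> int \<times> int" where
  "NM k 0 = (1, 1)"
| "NM k (Suc i) = (case NM k i of (n, m) \<Rightarrow> ((k-1)*n + k*m - (k-2), (k-2)*n + (k-1)*m + 3 - k))"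

lemma AB_NM: "fst (AB k i) = 2*(k-2)*fst (NM k i) + 4 - k \<and> snd (AB k i) = 2 * snd (NM k i) - 1"
proof (induction i)
  case 0 then show ?case by simp
next
  case (Suc i)
  obtain a b where e: "AB k i = (a, b)" by (cases "AB k i")
  obtain n m where f: "NM k i = (n, m)" by (cases "NM k i")
  from Suc e f have ha: "a = 2*(k-2)*n + 4 - k" and hb: "b = 2*m - 1" by auto
  show ?case using e f unfolding ha hb by (simp add: algebra_simps)
qed

lemma NM_pos: "k \<ge> 3 \<Longrightarrow> fst (NM k i) \<ge> 1 \<and> snd (NM k i) \<ge> 1"
proof (induction i)
  case 0 then show ?case by simp
next
  case (Suc i)
  obtain n m where e: "NM k i = (n, m)" by (cases "NM k i")
  with Suc have "n \<ge> 1" "m \<ge> 1" by auto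
  then have "(k-1)*n \<ge> k-1" "k*m \<ge> k" "(k-2)*n \<ge> k - 2" "(k-1)*m \<ge> k - 1"
    using Suc.prems by (simp_all add: mult_left_mono[where a=1, simplified])
  then have "(k-1)*n + k*m - (k-2) \<ge> 1 \<and> (k-2)*n + (k-1)*m + 3 - k \<ge> 1" using Suc.prems by linarith
  then show ?case using e by simp
qed

lemma AB_pell: "fst (AB k i) ^ 2 - k*(k-2) * snd (AB k i) ^ 2 = 2*k"
proof (induction i)
  case 0 then show ?case by (simp add: power2_eq_square algebra_simps)
next
  case (Suc i)
  obtain a b where e: "AB k i = (a, b)" by (cases "AB k i")
  with Suc have "a^2 - k*(k-2)*b^2 = 2*k" by simp
  then show ?case using e by (simp add: power2_eq_square algebra_simps)
qed

lemma AB_real: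
  fixes k :: int and s :: real
  defines "s \<equiv> sqrt (real_of_int (k * (k - 2)))"
  assumes "k \<ge> 3"
  shows "real_of_int (fst (AB k i)) + real_of_int (snd (AB k i)) * s = (real_of_int k + s) * (real_of_int k - 1 + s) ^ i
       \<and> real_of_int (fst (AB k i)) - real_of_int (snd (AB k i)) * s = (real_of_int k - s) * (real_of_int k - 1 - s) ^ i"
proof (induction i)
  case 0 then show ?case by simp
next
  case (Suc i)
  define K where "K = real_of_int k"
  have ss: "s * s = K * (K - 2)"
  proof -
    have "s * s = \<bar>real_of_int (k * (k - 2))\<bar>" unfolding s_def by (rule real_sqrt_mult_self)
    moreover have "real_of_int k * (real_of_int k - 2) \<ge> 0" using assms(2) by (intro mult_nonneg_nonneg) auto
    ultimately show ?thesis unfolding K_def by simp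
  qed
  obtain a b where e: "AB k i = (a, b)" by (cases "AB k i")
  with Suc have h1: "a + b * s = (K + s) * (K - 1 + s) ^ i" and h2: "a - b * s = (K - s) * (K - 1 - s) ^ i"
    unfolding K_def by auto
  define A where "A = real_of_int a"
  define B where "B = real_of_int b"
  have p1: "(A + B*s) * (K - 1 + s) = (K-1)*A + B*(s*s) + (A + (K-1)*B)*s" by (simp add: algebra_simps)
  have p2: "(A - B*s) * (K - 1 - s) = (K-1)*A + B*(s*s) - (A + (K-1)*B)*s" by (simp add: algebra_simps)
  have r1: "real_of_int ((k-1)*a + k*(k-2)*b) = (K-1)*A + B*(K*(K-2))" unfolding K_def A_def B_def by simp
  have r2: "real_of_int (a + (k-1)*b) = A + (K-1)*B" unfolding K_def A_def B_def by simp
  have "fst (AB k (Suc i)) = (k-1)*a + k*(k-2)*b" "snd (AB k (Suc i)) = a + (k-1)*b" using e by auto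
  then show ?case unfolding K_def[symmetric] using h1 h2 p1 p2 r1 r2 ss unfolding A_def B_def
    by (simp only: power_Suc mult.assoc[symmetric]) (simp only: mult.commute mult.left_commute)
qed

lemma AB_formula:
  fixes k :: int and s :: real
  defines "s \<equiv> sqrt (real_of_int (k * (k - 2)))"
  assumes "k \<ge> 3"
  shows "4 * real_of_int (fst (AB k i)) ^ 2 = 2 * real_of_int k * ((real_of_int k - 1 + s) ^ (2*i+1) + (real_of_int k - 1 - s) ^ (2*i+1)) + 4 * real_of_int k"
proof -
  define K where "K = real_of_int k"
  have ss: "s * s = K * (K - 2)"
  proof -
    have "s * s = \<bar>real_of_int (k * (k - 2))\<bar>" unfolding s_def by (rule real_sqrt_mult_self)
    moreover have "real_of_int k * (real_of_int k - 2) \<ge> 0" using assms(2) by (intro mult_nonneg_nonneg) auto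
    ultimately show ?thesis unfolding K_def by simp
  qed
  define a where "a = real_of_int (fst (AB k i))"
  define b where "b = real_of_int (snd (AB k i))"
  have h1: "a + b * s = (K + s) * (K - 1 + s) ^ i" and h2: "a - b * s = (K - s) * (K - 1 - s) ^ i"
    using AB_real[OF assms(2), of i] unfolding a_def b_def s_def K_def by auto
  have q1: "(K+s)^2 = 2*K*(K-1+s)"
  proof -
    have "(K+s)^2 = K*K + 2*K*s + s*s" by (simp add: power2_eq_square algebra_simps)
    then show ?thesis unfolding ss by (simp add: algebra_simps)
  qed
  have q2: "(K-s)^2 = 2*K*(K-1-s)"
  proof -
    have "(K-s)^2 = K*K - 2*K*s + s*s" by (simp add: power2_eq_square algebra_simps)
    then show ?thesis unfolding ss by (simp add: algebra_simps)
  qed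
  have q3: "(K+s)*(K-s) = 2*K"
  proof -
    have "(K+s)*(K-s) = K*K - s*s" by (simp add: algebra_simps)
    then show ?thesis unfolding ss by (simp add: algebra_simps)
  qed
  have q4: "(K - 1 + s)*(K-1-s) = 1"
  proof -
    have "(K - 1 + s)*(K-1-s) = (K-1)*(K-1) - s*s" by (simp add: algebra_simps)
    then show ?thesis unfolding ss by (simp add: algebra_simps)
  qed
  have "4 * a^2 = (a + b*s)^2 + (a - b*s)^2 + 2 * ((a + b*s) * (a - b*s))"
    by (simp add: power2_eq_square algebra_simps)
  also have "(a + b*s)^2 = (K+s)^2 * ((K - 1 + s)^i)^2" using h1 by (simp add: power_mult_distrib)
  also have "(a - b*s)^2 = (K-s)^2 * ((K - 1 - s)^i)^2" using h2 by (simp add: power_mult_distrib)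
  also have "(a + b*s) * (a - b*s) = ((K+s)*(K-s)) * ((K - 1 + s)*(K-1-s))^i"
    unfolding h1 h2 power_mult_distrib by (simp only: mult_ac)
  finally have "4 * a^2 = 2*K*((K - 1 + s) * ((K - 1 + s)^i)^2) + 2*K*((K - 1 - s) * ((K - 1 - s)^i)^2) + 4*K"
    unfolding q1 q2 q3 q4 by simp
  moreover have "\<And>x::real. x * (x^i)^2 = x^(2*i+1)" by (simp add: power_mult[symmetric] mult.commute)
  ultimately show ?thesis unfolding a_def K_def by (simp add: algebra_simps)
qed

lemma descent:
  fixes k :: int assumes k: "k \<ge> 3"
  shows "0 < b \<Longrightarrow> odd b \<Longrightarrow> 0 < a \<Longrightarrow> a^2 - k*(k-2)*b^2 = 2*k \<Longrightarrow> \<exists>i. AB k i = (a, b)"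
proof (induction "nat b" arbitrary: a b rule: less_induct)
  case less
  define D where "D = k*(k-2)"
  have D1: "(k-1)^2 = D + 1" unfolding D_def by (simp add: power2_eq_square algebra_simps)
  have Dpos: "D > 0" unfolding D_def using k by simp
  have pell: "a^2 = D*b^2 + 2*k" using less.prems unfolding D_def by simp
  show ?case
  proof (cases "b = 1")
    case True
    then have "a^2 = k^2" using pell unfolding D_def by (simp add: power2_eq_square algebra_simps)
    then have "(a-k)*(a+k) = 0" by (simp add: power2_eq_square algebra_simps)
    moreover have "a + k > 0" using less.prems k by linarith
    ultimately have "a = k" by simp
    then show ?thesis using True by (intro exI[of _ 0]) simp
  next
    case False
    then have b2: "b \<ge> 2" using less.prems by linarith
    have big: "b^2 > 2*k"
    proof (rule ccontr)
      assume "\<not> b^2 > 2*k"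
      then have le: "b^2 \<le> 2*k" by simp
      define c where "c = (k-1)*b"
      have c0: "c \<ge> 0" unfolding c_def using k less.prems by simp
      have "c^2 = (k-1)^2 * b^2" unfolding c_def by (rule power_mult_distrib)
      then have c2: "c^2 = D*b^2 + b^2" unfolding D1 by (simp add: distrib_right)
      have "c^2 \<le> a^2" using c2 pell le by linarith
      then have ca: "c \<le> a" by (rule power2_le_imp_le) (use less.prems in linarith)
      have "(k-1)*2 \<le> (k-1)*b" using b2 k by (intro mult_left_mono) auto
      then have cge: "c \<ge> 2*k - 2" unfolding c_def by simp
      have sq: "(c+1)^2 = c^2 + 2*c + 1" by (simp add: power2_eq_square algebra_simps)
      have "b^2 \<ge> 0" by simp
      then have "a^2 < (c+1)^2" using c2 pell sq cge k by linarith
      then have "a < c + 1" by (rule power_less_imp_less_base) (use c0 in linarith)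
      then have "a = c" using ca by simp
      then have "b^2 = 2*k" using c2 pell by simp
      then have "even (b^2)" by simp
      then have "even b" by simp
      then show False using less.prems by simp
    qed
    define a' where "a' = (k-1)*a - D*b"
    define b' where "b' = (k-1)*b - a"
    have kb0: "(k-1)*b \<ge> 0" using k less.prems by simp
    have "((k-1)*b)^2 = (k-1)^2 * b^2" by (rule power_mult_distrib)
    then have "((k-1)*b)^2 = D*b^2 + b^2" unfolding D1 by (simp add: distrib_right)
    then have "a^2 < ((k-1)*b)^2" using big pell by linarith
    then have "a < (k-1)*b" by (rule power_less_imp_less_base) (use kb0 in linarith)
    then have b'pos: "b' > 0" unfolding b'_def by simp
    have b'lt: "b' < b"
    proof (rule ccontr)
      assume "\<not> b' < b"
      then have "a \<le> (k-2)*b" unfolding b'_def by (simp add: algebra_simps)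
      then have "a^2 \<le> ((k-2)*b)^2" by (rule power_mono) (use less.prems in linarith)
      moreover have "((k-2)*b)^2 + 2*(k-2)*b^2 = D*b^2" unfolding D_def by (simp add: power2_eq_square algebra_simps)
      moreover have "2*(k-2)*b^2 > 0" using k less.prems by simp
      ultimately show False using pell k by linarith
    qed
    have a'pos: "a' > 0"
    proof (rule ccontr)
      assume "\<not> a' > 0"
      then have "(k-1)*a \<le> D*b" unfolding a'_def by simp
      then have "((k-1)*a)^2 \<le> (D*b)^2" using less.prems k by (intro power_mono) auto
      moreover have "((k-1)*a)^2 = (D+1)*(D*b^2 + 2*k)" using D1 pell by (simp add: power_mult_distrib)
      moreover have "(D+1)*(D*b^2 + 2*k) = (D*b)^2 + D*b^2 + 2*k*(D+1)" by (simp add: power2_eq_square algebra_simps)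
      moreover have "D*b^2 > 0" using Dpos less.prems by simp
      moreover have "2*k*(D+1) > 0" using Dpos k by simp
      ultimately show False by linarith
    qed
    have par: "even (a^2) = even (D*b^2)" using pell by simp
    have b'odd: "odd b'"
    proof (cases "even k")
      case True
      then have "even D" unfolding D_def by simp
      then have "even a" using par by simp
      moreover have "odd ((k-1)*b)" using True less.prems by simp
      ultimately show ?thesis unfolding b'_def by simp
    next
      case False
      then have "odd D" unfolding D_def by simp
      then have "odd a" using par less.prems by simp
      moreover have "even ((k-1)*b)" using False by simp
      ultimately show ?thesis unfolding b'_def by simp
    qed
    have id: "a'^2 - D*b'^2 = ((k-1)^2 - D)*(a^2 - D*b^2)"
      unfolding a'_def b'_def by (simp add: power2_eq_square algebra_simps)
    then have pell': "a'^2 - k*(k-2)*b'^2 = 2*k" using D1 pell unfolding D_def by simp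
    have "nat b' < nat b" using b'lt b'pos by simp
    then obtain i where i: "AB k i = (a', b')" using less.hyps b'pos b'odd a'pos pell' by blast
    have e1: "(k-1)*a' + k*(k-2)*b' = ((k-1)^2 - D) * a"
      unfolding a'_def b'_def D_def by (simp add: power2_eq_square algebra_simps)
    have e2: "a' + (k-1)*b' = ((k-1)^2 - D) * b"
      unfolding a'_def b'_def D_def by (simp add: power2_eq_square algebra_simps)
    have "AB k (Suc i) = (a, b)" using i e1 e2 D1 by simp
    then show ?thesis by blast
  qed
qed


lemma poly_a:
  fixes k n :: int assumes k: "k \<ge> 3"
  shows "polygonal n k = (real_of_int (2*(k-2)*n + 4 - k) ^ 2 - (real_of_int k - 4)^2) / (8 * (real_of_int k - 2))"
proof -
  define K where "K = real_of_int k"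
  define x where "x = real_of_int n"
  have K2: "K - 2 \<noteq> 0" using k unfolding K_def by simp
  have num: "(2*(K-2)*x + 4 - K)^2 - (K-4)^2 = 4*(K-2)*((K-2)*x^2 + (4-K)*x)"
    by (simp add: power2_eq_square algebra_simps)
  have "polygonal n k = ((K-2)*x^2 + (4-K)*x) / 2" unfolding polygonal_def K_def x_def by simp
  also have "\<dots> = (4*(K-2)*((K-2)*x^2 + (4-K)*x)) / (8*(K-2))" using K2 by (simp add: field_simps)
  also have "\<dots> = ((2*(K-2)*x + 4 - K)^2 - (K-4)^2) / (8*(K-2))" using num by simp
  finally have fin: "polygonal n k = ((2*(K-2)*x + 4 - K)^2 - (K-4)^2) / (8*(K-2))" .
  have e1: "real_of_int (2*(k-2)*n + 4 - k) = 2*(K-2)*x + 4 - K" unfolding K_def x_def by simp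
  show ?thesis unfolding e1 K_def[symmetric] by (rule fin)
qed

lemma formula_a:
  fixes k :: int assumes k: "k \<ge> 3"
  shows "real_of_int k / (16 * real_of_int (k - 2)) *
              ((- 2 * (real_of_int k)^2 + 18 * real_of_int k - 32) / real_of_int k
               + (real_of_int k - 1 + sqrt (real_of_int (k * (k - 2)))) ^ (2 * i + 1)
               + (real_of_int k - 1 - sqrt (real_of_int (k * (k - 2)))) ^ (2 * i + 1))
       = (real_of_int (fst (AB k i)) ^ 2 - (real_of_int k - 4)^2) / (8 * (real_of_int k - 2))"
proof -
  define S where "S = (real_of_int k - 1 + sqrt (real_of_int (k * (k - 2)))) ^ (2 * i + 1)
               + (real_of_int k - 1 - sqrt (real_of_int (k * (k - 2)))) ^ (2 * i + 1)"
  define a where "a = real_of_int (fst (AB k i))"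
  have h: "4 * a^2 = 2 * real_of_int k * S + 4 * real_of_int k"
    using AB_formula[OF k, of i] unfolding S_def a_def by simp
  have k0: "real_of_int k \<noteq> 0" "real_of_int k - 2 \<noteq> 0" using k by auto
  have kS: "real_of_int k * S = 2*a^2 - 2*real_of_int k" using h by simp
  have "real_of_int k / (16 * real_of_int (k - 2)) *
              ((- 2 * (real_of_int k)^2 + 18 * real_of_int k - 32) / real_of_int k + S)
       = ((- 2 * (real_of_int k)^2 + 18 * real_of_int k - 32) + real_of_int k * S) / (16 * (real_of_int k - 2))"
    using k0 by (simp add: field_simps)
  also have "\<dots> = (a ^ 2 - (real_of_int k - 4)^2) / (8 * (real_of_int k - 2))"
    unfolding kS using k0 by (simp add: field_simps power2_eq_square)
  finally have "real_of_int k / (16 * real_of_int (k - 2)) *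
              ((- 2 * (real_of_int k)^2 + 18 * real_of_int k - 32) / real_of_int k + S)
       = (a ^ 2 - (real_of_int k - 4)^2) / (8 * (real_of_int k - 2))" .
  then show ?thesis unfolding S_def a_def by (simp add: add.assoc)
qed

theorem mainTheorem1:
  fixes k :: int
  assumes "k \<ge> 3"
  shows "real_of_int ` {N :: int. (\<exists>n::int. n \<ge> 1 \<and> real_of_int N = polygonal n k)
                 \<and> (\<exists>m::int. m \<ge> 0 \<and> real_of_int N = centered_polygonal m k)}
         = {x :: real. \<exists>i::nat. x =
              real_of_int k / (16 * real_of_int (k - 2)) *
              ((- 2 * (real_of_int k)^2 + 18 * real_of_int k - 32) / real_of_int k
               + (real_of_int k - 1 + sqrt (real_of_int (k * (k - 2)))) ^ (2 * i + 1)
               + (real_of_int k - 1 - sqrt (real_of_int (k * (k - 2)))) ^ (2 * i + 1))}"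
proof (rule equalityI; rule subsetI)
  have k: "k \<ge> 3" by fact
  fix x assume "x \<in> real_of_int ` {N :: int. (\<exists>n::int. n \<ge> 1 \<and> real_of_int N = polygonal n k)
                 \<and> (\<exists>m::int. m \<ge> 0 \<and> real_of_int N = centered_polygonal m k)}"
  then obtain N n m where x: "x = real_of_int N" and n: "n \<ge> 1" and m: "m \<ge> 0"
    and hp: "real_of_int N = polygonal n k" and hc: "real_of_int N = centered_polygonal m k" by blast
  have "real_of_int (2*N) = real_of_int ((k-2)*n^2 + (4-k)*n)" using hp unfolding polygonal_def by simp
  then have P: "2*N = (k-2)*n^2 + (4-k)*n" by (simp only: of_int_eq_iff)
  have "real_of_int (2*N) = real_of_int (k*m^2 - k*m + 2)" using hc unfolding centered_polygonal_def by simp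
  then have C: "2*N = k*m^2 - k*m + 2" by (simp only: of_int_eq_iff)
  define a where "a = 2*(k-2)*n + 4 - k"
  define b where "b = \<bar>2*m - 1\<bar>"
  have idt: "a^2 - k*(k-2)*b^2 - 2*k = 4*(k-2)*(((k-2)*n^2 + (4-k)*n) - (k*m^2 - k*m + 2))"
    unfolding a_def b_def by (simp add: power2_eq_square algebra_simps)
  have pell: "a^2 - k*(k-2)*b^2 = 2*k" using idt P C by simp
  have "(k-2)*n \<ge> (k-2)*1" using n k by (intro mult_left_mono) auto
  then have "(k-2)*n \<ge> k-2" by simp
  moreover have "a = 2*((k-2)*n) + 4 - k" unfolding a_def by simp
  ultimately have apos: "a > 0" using k by linarith
  have bodd: "odd b" unfolding b_def by simp
  have "2*m - 1 \<noteq> 0" by presburger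
  then have bpos: "b > 0" unfolding b_def by simp
  obtain i where i: "AB k i = (a, b)" using descent[OF k bpos bodd apos pell] by blast
  have "x = (real_of_int a ^ 2 - (real_of_int k - 4)^2) / (8 * (real_of_int k - 2))"
    using x hp poly_a[OF k, of n] unfolding a_def by simp
  then show "x \<in> {x :: real. \<exists>i::nat. x =
              real_of_int k / (16 * real_of_int (k - 2)) *
              ((- 2 * (real_of_int k)^2 + 18 * real_of_int k - 32) / real_of_int k
               + (real_of_int k - 1 + sqrt (real_of_int (k * (k - 2)))) ^ (2 * i + 1)
               + (real_of_int k - 1 - sqrt (real_of_int (k * (k - 2)))) ^ (2 * i + 1))}"
    using formula_a[OF k, of i] i by (intro CollectI exI[of _ i]) simp
next
  have k: "k \<ge> 3" by fact
  fix x assume "x \<in> {x :: real. \<exists>i::nat. x =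
              real_of_int k / (16 * real_of_int (k - 2)) *
              ((- 2 * (real_of_int k)^2 + 18 * real_of_int k - 32) / real_of_int k
               + (real_of_int k - 1 + sqrt (real_of_int (k * (k - 2)))) ^ (2 * i + 1)
               + (real_of_int k - 1 - sqrt (real_of_int (k * (k - 2)))) ^ (2 * i + 1))}"
  then obtain i where xi: "x = real_of_int k / (16 * real_of_int (k - 2)) *
              ((- 2 * (real_of_int k)^2 + 18 * real_of_int k - 32) / real_of_int k
               + (real_of_int k - 1 + sqrt (real_of_int (k * (k - 2)))) ^ (2 * i + 1)
               + (real_of_int k - 1 - sqrt (real_of_int (k * (k - 2)))) ^ (2 * i + 1))" by blast
  obtain n m where nm: "NM k i = (n, m)" by (cases "NM k i")
  have n: "n \<ge> 1" and m: "m \<ge> 1" using NM_pos[OF k, of i] nm by auto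
  define a where "a = 2*(k-2)*n + 4 - k"
  define b where "b = 2*m - 1"
  have ab: "AB k i = (a, b)" using AB_NM[of k i] nm unfolding a_def b_def by (cases "AB k i") auto
  have pell: "a^2 - k*(k-2)*b^2 = 2*k" using AB_pell[of k i] ab by simp
  have idt: "a^2 - k*(k-2)*b^2 - 2*k = 4*(k-2)*(((k-2)*n^2 + (4-k)*n) - (k*m^2 - k*m + 2))"
    unfolding a_def b_def by (simp add: power2_eq_square algebra_simps)
  have "4*(k-2)*(((k-2)*n^2 + (4-k)*n) - (k*m^2 - k*m + 2)) = 0" using idt pell by simp
  then have PC: "(k-2)*n^2 + (4-k)*n = k*m^2 - k*m + 2" using k by simp
  have "even (m*(m-1))" by (cases "even m") auto
  then have "even (k*m^2 - k*m + 2)" by (simp add: power2_eq_square algebra_simps)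
  then obtain N where N: "k*m^2 - k*m + 2 = 2*N" by (metis evenE)
  have hc: "real_of_int N = centered_polygonal m k"
  proof -
    have "real_of_int (k*m^2 - k*m + 2) = real_of_int (2*N)" using N by simp
    then show ?thesis unfolding centered_polygonal_def by simp
  qed
  have hp: "real_of_int N = polygonal n k"
  proof -
    have "real_of_int ((k-2)*n^2 + (4-k)*n) = real_of_int (2*N)" using N PC by simp
    then show ?thesis unfolding polygonal_def by simp
  qed
  have "x = real_of_int N" using xi formula_a[OF k, of i] ab hp poly_a[OF k, of n] unfolding a_def by simp
  then show "x \<in> real_of_int ` {N :: int. (\<exists>n::int. n \<ge> 1 \<and> real_of_int N = polygonal n k)
                 \<and> (\<exists>m::int. m \<ge> 0 \<and> real_of_int N = centered_polygonal m k)}"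
  proof (rule image_eqI)
    have m0: "m \<ge> 0" using m by simp
    show "N \<in> {N :: int. (\<exists>n::int. n \<ge> 1 \<and> real_of_int N = polygonal n k)
                 \<and> (\<exists>m::int. m \<ge> 0 \<and> real_of_int N = centered_polygonal m k)}"
      using n m0 hp hc by blast
  qed
qed

end
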